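(* Work without the expansion bound (an expanded side $a_i$ may take any length $a_i'\ge a_i$). Let $A_1,\dots,A_k$ be $n$-dimensional boxes and $\mathcal{O}$ a set of orders of them each of which is a possible arrangement, and fix states realizing each of these arrangements. Let $s$ be the closed length of one side of one box $A$, and let $x\le s\le y$ be numbers such that every other side length occurring — every other closed side length of every box, and every expanded side length in any of the fixed states — is either less than $x$ or greater than $y$. Then for any $r$ with $x\le r\le y$, the collection obtained by replacing this side length $s$ of $A$ by $r$ can be put in every order of $\mathcal{O}$.
   Context: An $n$-dimensional box $A$ has closed side lengths $a_1\le\dots\le a_n$ (positive reals). A state of $A$ is either closed or expanded along one side $i$: $a_i$ is replaced by a length $a_i'\ge a_i$, other sides unchanged (only one side can expand). The dimension vector of a state is its side lengths sorted non-decreasingly. A box in some state fits inside another box in some state if each coordinate of the outer one's dimension vector is strictly larger than the corresponding coordinate of the inner one's. An order $X_1,\dots,X_k$ (innermost to outermost) is a possible arrangement if each box can be given a state so that $X_j$ fits inside $X_{j+1}$ for all $j$; states may differ between arrangements. *)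

theory Defs
  imports Complex_Main
begin

text \<open>A box is given by the list of its closed side lengths (positive reals).\<close>
type_synonym box = "real list"

definition is_box :: "nat \<Rightarrow> box \<Rightarrow> bool" where
  "is_box n A \<longleftrightarrow> length A = n \<and> (\<forall>j<n. 0 < A ! j)"

text \<open>A state: None = closed; Some (i, l) = expanded along side i to length l.\<close>
type_synonym state = "(nat \<times> real) option"

definition valid_state :: "box \<Rightarrow> state \<Rightarrow> bool" where
  "valid_state A st = (case st of None \<Rightarrow> True
      | Some (i, l) \<Rightarrow> i < length A \<and> A ! i \<le> l)"

definition side_lengths :: "box \<Rightarrow> state \<Rightarrow> real list" where
  "side_lengths A st = (case st of None \<Rightarrow> A | Some (i, l) \<Rightarrow> A[i := l])"

definition dimvec :: "box \<Rightarrow> state \<Rightarrow> real list" where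
  "dimvec A st = sort (side_lengths A st)"

definition fits :: "real list \<Rightarrow> real list \<Rightarrow> bool" where
  "fits u v \<longleftrightarrow> length u = length v \<and> (\<forall>j<length u. u ! j < v ! j)"

text \<open>An order of boxes 0..k-1: list of indices, innermost first.\<close>
definition is_order :: "nat \<Rightarrow> nat list \<Rightarrow> bool" where
  "is_order k \<sigma> \<longleftrightarrow> distinct \<sigma> \<and> set \<sigma> = {..<k}"

definition arranged_by :: "(nat \<Rightarrow> box) \<Rightarrow> nat list \<Rightarrow> (nat \<Rightarrow> state) \<Rightarrow> bool" where
  "arranged_by B \<sigma> S \<longleftrightarrow>
     (\<forall>i\<in>set \<sigma>. valid_state (B i) (S i)) \<and>
     (\<forall>j. Suc j < length \<sigma> \<longrightarrow>
        fits (dimvec (B (\<sigma> ! j)) (S (\<sigma> ! j)))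
             (dimvec (B (\<sigma> ! Suc j)) (S (\<sigma> ! Suc j))))"

definition possible_arrangement :: "(nat \<Rightarrow> box) \<Rightarrow> nat list \<Rightarrow> bool" where
  "possible_arrangement B \<sigma> \<longleftrightarrow> (\<exists>S. arranged_by B \<sigma> S)"

end

theory Submission
  imports Defs "HOL-Library.Multiset"
begin

lemma sort_map_strict:
  fixes xs :: "real list" and f :: "real \<Rightarrow> real"
  assumes m: "\<forall>u\<in>set xs. \<forall>v\<in>set xs. u < v \<longrightarrow> f u < f v"
  shows "sort (map f xs) = map f (sort xs)"
proof (rule properties_for_sort)
  show "mset (map f (sort xs)) = mset (map f xs)" by simp
  have "sorted_wrt (\<lambda>x y. f x \<le> f y) (sort xs)"
  proof (rule sorted_wrt_mono_rel[of _ "(\<le>)"])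
    fix u v assume "u \<in> set (sort xs)" "v \<in> set (sort xs)" "u \<le> v"
    then show "f u \<le> f v" using m by (cases "u = v") (auto simp: less_le_not_le intro: less_imp_le)
  qed simp
  then show "sorted (map f (sort xs))" by (simp add: sorted_map)
qed

lemma fits_map:
  fixes f :: "real \<Rightarrow> real"
  assumes "fits u v" "set u \<subseteq> T" "set v \<subseteq> T"
    and m: "\<forall>a\<in>T. \<forall>b\<in>T. a < b \<longrightarrow> f a < f b"
  shows "fits (map f u) (map f v)"
  using assms unfolding fits_def
  by (auto simp: subset_iff)

theorem proposition26:
  fixes n k :: nat and B :: "nat \<Rightarrow> box" and Ords :: "nat list set"
    and st :: "nat list \<Rightarrow> nat \<Rightarrow> state"
    and a p :: nat and s x y :: real
  assumes boxes: "\<forall>i<k. is_box n (B i)"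
    and orders: "\<forall>\<sigma>\<in>Ords. is_order k \<sigma>"
    and realized: "\<forall>\<sigma>\<in>Ords. arranged_by B \<sigma> (st \<sigma>)"
    and a: "a < k" and p: "p < n"
    and s: "s = B a ! p"
    and xs: "x \<le> s" and sy: "s \<le> y"
    and other_closed: "\<forall>i<k. \<forall>j<n. (i, j) \<noteq> (a, p) \<longrightarrow> B i ! j < x \<or> y < B i ! j"
    and expanded: "\<forall>\<sigma>\<in>Ords. \<forall>i<k. \<forall>j l. st \<sigma> i = Some (j, l) \<longrightarrow> l < x \<or> y < l"
  shows "\<forall>r. x \<le> r \<and> r \<le> y \<longrightarrow>
           (\<forall>\<sigma>\<in>Ords. possible_arrangement (B(a := (B a)[p := r])) \<sigma>)"
proof (intro allI impI ballI)
  fix r \<sigma> assume r: "x \<le> r \<and> r \<le> y" and \<sigma>: "\<sigma> \<in> Ords"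
  define B' where "B' = B(a := (B a)[p := r])"
  define f where "f = (\<lambda>t::real. if t = s then r else t)"
  define T where "T = {t::real. t < x \<or> y < t} \<union> {s}"
  define S where "S = st \<sigma>"
  have mono: "\<forall>u\<in>T. \<forall>v\<in>T. u < v \<longrightarrow> f u < f v"
    using r xs sy unfolding T_def f_def by auto
  have sk: "set \<sigma> = {..<k}" using orders \<sigma> by (simp add: is_order_def)
  have arr: "arranged_by B \<sigma> S" using realized \<sigma> S_def by simp
  have lenB: "\<And>i. i < k \<Longrightarrow> length (B i) = n" using boxes by (simp add: is_box_def)
  have setB: "\<And>i. i < k \<Longrightarrow> set (B i) \<subseteq> T"
  proof
    fix i t assume i: "i < k" and t: "t \<in> set (B i)"
    then obtain j where j: "j < n" "t = B i ! j" using lenB by (metis in_set_conv_nth)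
    show "t \<in> T" using other_closed i j s unfolding T_def by (cases "(i,j) = (a,p)") auto
  qed
  have notsB: "\<And>i j. i < k \<Longrightarrow> j < n \<Longrightarrow> (i,j) \<noteq> (a,p) \<Longrightarrow> B i ! j \<noteq> s"
    using other_closed xs sy by fastforce
  have K: "side_lengths (B' i) (S i) = map f (side_lengths (B i) (S i))
           \<and> set (side_lengths (B i) (S i)) \<subseteq> T \<and> valid_state (B' i) (S i)" if i: "i \<in> set \<sigma>" for i
  proof -
    have ik: "i < k" using i sk by auto
    have vs: "valid_state (B i) (S i)" using arr i by (simp add: arranged_by_def)
    show ?thesis
    proof (cases "S i")
      case None
      have "B' i = map f (B i)"
      proof (rule nth_equalityI)
        show "length (B' i) = length (map f (B i))" by (simp add: B'_def)
        fix j assume "j < length (B' i)"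
        then have j: "j < n" using lenB[OF ik] lenB[OF a] by (auto simp: B'_def split: if_splits)
        show "B' i ! j = map f (B i) ! j"
          using notsB[OF ik j] j lenB[OF ik] s p by (cases "i = a"; cases "j = p") (auto simp: B'_def f_def)
      qed
      then show ?thesis using None setB[OF ik] by (simp add: side_lengths_def valid_state_def)
    next
      case (Some q)
      then obtain j l where q: "S i = Some (j, l)" by (cases q) auto
      have jl: "j < n" "B i ! j \<le> l" using vs q lenB[OF ik] by (auto simp: valid_state_def)
      have lT: "l < x \<or> y < l" using expanded \<sigma> ik q S_def by auto
      have ls: "l \<noteq> s" using lT xs sy by auto
      have eq: "(B' i)[j := l] = map f ((B i)[j := l])"
      proof (rule nth_equalityI)
        show "length ((B' i)[j := l]) = length (map f ((B i)[j := l]))" by (simp add: B'_def)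
        fix m assume "m < length ((B' i)[j := l])"
        then have m: "m < n" using lenB[OF ik] lenB[OF a] by (auto simp: B'_def split: if_splits)
        show "(B' i)[j := l] ! m = map f ((B i)[j := l]) ! m"
          using notsB[OF ik m] m lenB[OF ik] s ls p by (cases "i = a"; cases "m = p"; cases "m = j") (auto simp: B'_def f_def)
      qed
      have st: "set ((B i)[j := l]) \<subseteq> T"
        using set_update_subset_insert[of "B i" j l] setB[OF ik] lT unfolding T_def by auto
      have v: "valid_state (B' i) (S i)"
      proof (cases "i = a \<and> j = p")
        case True
        then have "l > y" using jl lT s xs by auto
        then show ?thesis using True q jl r lenB[OF ik] by (simp add: valid_state_def B'_def)
      next
        case False
        then show ?thesis using q jl lenB[OF ik] lenB[OF a]
          by (auto simp: valid_state_def B'_def nth_list_update)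
      qed
      show ?thesis using eq st v q by (simp add: side_lengths_def)
    qed
  qed
  have D: "dimvec (B' i) (S i) = map f (dimvec (B i) (S i)) \<and> set (dimvec (B i) (S i)) \<subseteq> T"
    if i: "i \<in> set \<sigma>" for i
  proof -
    have "\<forall>u\<in>set (side_lengths (B i) (S i)). \<forall>v\<in>set (side_lengths (B i) (S i)). u < v \<longrightarrow> f u < f v"
      using K[OF i] mono by blast
    then show ?thesis using K[OF i] sort_map_strict by (simp add: dimvec_def)
  qed
  have "arranged_by B' \<sigma> S"
    unfolding arranged_by_def
  proof (intro conjI allI impI ballI)
    fix i assume "i \<in> set \<sigma>" then show "valid_state (B' i) (S i)" using K by blast
  next
    fix j assume j: "Suc j < length \<sigma>"
    have i1: "\<sigma> ! j \<in> set \<sigma>" "\<sigma> ! Suc j \<in> set \<sigma>" using j by auto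
    have "fits (dimvec (B (\<sigma> ! j)) (S (\<sigma> ! j))) (dimvec (B (\<sigma> ! Suc j)) (S (\<sigma> ! Suc j)))"
      using arr j by (simp add: arranged_by_def)
    then show "fits (dimvec (B' (\<sigma> ! j)) (S (\<sigma> ! j))) (dimvec (B' (\<sigma> ! Suc j)) (S (\<sigma> ! Suc j)))"
      using D[OF i1(1)] D[OF i1(2)] fits_map mono by metis
  qed
  then show "possible_arrangement (B(a := (B a)[p := r])) \<sigma>"
    unfolding possible_arrangement_def B'_def by blast
qed

end
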